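(* Consider any run of TruVaR (defined in the context), in BO or LSE mode, under the Submodularity Assumption. Let $t\ge1$ be such that the epoch index in effect when $x_t$ is chosen and when $x_{t+1}$ is chosen is the same value $i$ (i.e. the while-loop at the end of step $t$ does not increment $i$). For $s\in\{t,t+1\}$ define, for finite multisets $S$ of points of $D$, $$g_s(S)=\sum_{\bar x\in M_{s-1}}\max\Big\{\sigma^2_{s-1}(\bar x),\tfrac{\eta_{(i)}^2}{\beta_{(i)}}\Big\}-\sum_{\bar x\in M_{s-1}}\max\Big\{\sigma^2_{s-1|S}(\bar x),\tfrac{\eta_{(i)}^2}{\beta_{(i)}}\Big\},\qquad g_{s,\max}=\sum_{\bar x\in M_{s-1}}\max\Big\{0,\ \sigma^2_{s-1}(\bar x)-\tfrac{\eta_{(i)}^2}{\beta_{(i)}}\Big\}.$$ Suppose $g_{t,\max}>0$ and let $S_t^*$ be a multiset of minimum cost $c(S)$ among those with $g_t(S)=g_{t,\max}$. Then $$g_{t+1,\max}\ \le\ \Big(1-\frac{c(x_t)}{c(S_t^* )}\Big)\,g_{t,\max}.$$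
   Context: Setting. $D$ is a finite set. The unknown function $f:D\to\mathbb R$ is a sample from a zero-mean Gaussian process with known kernel $k$ satisfying $k(x,x)=1$ for all $x\in D$. There is a known noise-variance function $\sigma^2(\cdot):D\to(0,\infty)$ and a known cost function $c:D\to(0,\infty)$. At step $t$ the algorithm queries $x_t\in D$ and observes $y_t=f(x_t)+z_t$ with $z_t\sim N(0,\sigma^2(x_t))$ independent of everything else. Posterior after $t$ steps: $\mu_t(x)=\mathbf k_t(x)^T(\mathbf K_t+\Sigma_t)^{-1}\mathbf y_t$ and $\sigma_t^2(x)=k(x,x)-\mathbf k_t(x)^T(\mathbf K_t+\Sigma_t)^{-1}\mathbf k_t(x)$, where $\mathbf k_t(x)=[k(x_j,x)]_{j=1}^t$, $\mathbf K_t=[k(x_j,x_{j'})]_{j,j'=1}^t$, $\Sigma_t=\mathrm{diag}(\sigma^2(x_1),\dots,\sigma^2(x_t))$, $\mathbf y_t=(y_1,\dots,y_t)^T$. For a finite multiset $S$ of points of $D$, $\sigma^2_{t|S}(\bar x)$ is the posterior variance of $f(\bar x)$ given noisy observations at $x_1,\dots,x_t$ and additionally at every point of $S$ (with multiplicity); $\sigma_{t|x}:=\sigma_{t|\{x\}}$; $c(S)=\sum_{x\in S}c(x)$ counted with multiplicity. Algorithm TruVaR. Parameters: $\bar\delta>0$, $r\in(0,1)$, $\eta_{(1)}>0$, a sequence $\beta_{(1)},\beta_{(2)},\dots>0$, and in LSE mode a threshold $h\in\mathbb R$. Initialize epoch index $i=1$, $M_0=D$, and (LSE) $H_0=L_0=\emptyset$.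 For $t=1,2,\dots$: (1) choose $x_t\in\arg\max_{x\in D}\frac{1}{c(x)}\Big[\sum_{\bar x\in M_{t-1}}\max\{\beta_{(i)}\sigma^2_{t-1}(\bar x),\eta_{(i)}^2\}-\sum_{\bar x\in M_{t-1}}\max\{\beta_{(i)}\sigma^2_{t-1|x}(\bar x),\eta_{(i)}^2\}\Big]$; (2) observe $y_t$, compute $\mu_t,\sigma_t$, and set $u_t=\mu_t+\beta_{(i)}^{1/2}\sigma_t$, $\ell_t=\mu_t-\beta_{(i)}^{1/2}\sigma_t$ (current $i$). In BO mode set $M_t=\{x\in M_{t-1}: u_t(x)\ge\max_{\bar x\in M_{t-1}}\ell_t(\bar x)\}$. In LSE mode set $M_t=\{x\in M_{t-1}: u_t(x)\ge h\text{ and }\ell_t(x)\le h\}$, $H_t=H_{t-1}\cup\{x\in M_{t-1}:\ell_t(x)>h\}$, $L_t=L_{t-1}\cup\{x\in M_{t-1}:u_t(x)<h\}$; (3) while $\max_{x\in M_t}\beta_{(i)}^{1/2}\sigma_t(x)\le(1+\bar\delta)\eta_{(i)}$: increment $i$ and set $\eta_{(i)}=r\,\eta_{(i-1)}$. Submodularity Assumption: for every $t\ge0$, every choice of previously selected points $x_1,\dots,x_t$, and every $x\in D$, the set function $S\mapsto\sigma_t^2(x)-\sigma^2_{t|S}(x)$ (on finite multisets of $D$) is submodular. *)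

theory Defs
  imports "Jordan_Normal_Form.Gauss_Jordan_Elimination" "HOL-Library.Multiset"
begin

definition kvec :: "('a \<Rightarrow> 'a \<Rightarrow> real) \<Rightarrow> 'a list \<Rightarrow> 'a \<Rightarrow> real vec" where
  "kvec k xs x = vec (length xs) (\<lambda>j. k (xs ! j) x)"

definition gram_noise :: "('a \<Rightarrow> 'a \<Rightarrow> real) \<Rightarrow> ('a \<Rightarrow> real) \<Rightarrow> 'a list \<Rightarrow> real mat" where
  "gram_noise k s2 xs = mat (length xs) (length xs)
     (\<lambda>(j, j'). k (xs ! j) (xs ! j') + (if j = j' then s2 (xs ! j) else 0))"

definition post_mean :: "('a \<Rightarrow> 'a \<Rightarrow> real) \<Rightarrow> ('a \<Rightarrow> real) \<Rightarrow> 'a list \<Rightarrow> real list \<Rightarrow> 'a \<Rightarrow> real" where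
  "post_mean k s2 xs ys x =
     kvec k xs x \<bullet> (the (mat_inverse (gram_noise k s2 xs)) *\<^sub>v vec_of_list ys)"

definition post_var :: "('a \<Rightarrow> 'a \<Rightarrow> real) \<Rightarrow> ('a \<Rightarrow> real) \<Rightarrow> 'a list \<Rightarrow> 'a \<Rightarrow> real" where
  "post_var k s2 xs x =
     k x x - kvec k xs x \<bullet> (the (mat_inverse (gram_noise k s2 xs)) *\<^sub>v kvec k xs x)"

text \<open>Posterior variance given xs and additionally every point of the multiset S
  (the order in which S is appended is irrelevant mathematically).\<close>
definition post_var_ms :: "('a \<Rightarrow> 'a \<Rightarrow> real) \<Rightarrow> ('a \<Rightarrow> real) \<Rightarrow> 'a list \<Rightarrow> 'a multiset \<Rightarrow> 'a \<Rightarrow> real" where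
  "post_var_ms k s2 xs S x = post_var k s2 (xs @ (SOME ys. mset ys = S)) x"

definition mcost :: "('a \<Rightarrow> real) \<Rightarrow> 'a multiset \<Rightarrow> real" where
  "mcost c S = sum_mset (image_mset c S)"

definition psd_kernel_on :: "'a set \<Rightarrow> ('a \<Rightarrow> 'a \<Rightarrow> real) \<Rightarrow> bool" where
  "psd_kernel_on D k \<longleftrightarrow> (\<forall>x\<in>D. \<forall>y\<in>D. k x y = k y x) \<and>
     (\<forall>xs (v :: nat \<Rightarrow> real). set xs \<subseteq> D \<longrightarrow>
        0 \<le> (\<Sum>i<length xs. \<Sum>j<length xs. v i * v j * k (xs ! i) (xs ! j)))"

definition submodular_ms :: "'a set \<Rightarrow> ('a multiset \<Rightarrow> real) \<Rightarrow> bool" where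
  "submodular_ms D F \<longleftrightarrow> (\<forall>A B e. set_mset B \<subseteq> D \<and> A \<subseteq># B \<and> e \<in> D \<longrightarrow>
      F (add_mset e B) - F B \<le> F (add_mset e A) - F A)"

datatype mode = BO | LSE real

definition pts :: "(nat \<Rightarrow> 'b) \<Rightarrow> nat \<Rightarrow> 'b list" where
  "pts x t = map x [1..<Suc t]"

definition tru_score ::
  "('a \<Rightarrow> 'a \<Rightarrow> real) \<Rightarrow> ('a \<Rightarrow> real) \<Rightarrow> ('a \<Rightarrow> real) \<Rightarrow> real \<Rightarrow> real \<Rightarrow> 'a set \<Rightarrow> 'a list \<Rightarrow> 'a \<Rightarrow> real" where
  "tru_score k s2 c b e M xs z =
     (1 / c z) * ((\<Sum>xb\<in>M. max (b * post_var k s2 xs xb) (e\<^sup>2))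
                - (\<Sum>xb\<in>M. max (b * post_var_ms k s2 xs {#z#} xb) (e\<^sup>2)))"

definition ucb :: "('a \<Rightarrow> 'a \<Rightarrow> real) \<Rightarrow> ('a \<Rightarrow> real) \<Rightarrow> real \<Rightarrow> 'a list \<Rightarrow> real list \<Rightarrow> 'a \<Rightarrow> real" where
  "ucb k s2 b xs ys z = post_mean k s2 xs ys z + sqrt b * sqrt (post_var k s2 xs z)"

definition lcb :: "('a \<Rightarrow> 'a \<Rightarrow> real) \<Rightarrow> ('a \<Rightarrow> real) \<Rightarrow> real \<Rightarrow> 'a list \<Rightarrow> real list \<Rightarrow> 'a \<Rightarrow> real" where
  "lcb k s2 b xs ys z = post_mean k s2 xs ys z - sqrt b * sqrt (post_var k s2 xs z)"

definition update_M :: "mode \<Rightarrow> 'a set \<Rightarrow> ('a \<Rightarrow> real) \<Rightarrow> ('a \<Rightarrow> real) \<Rightarrow> 'a set" where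
  "update_M md Mprev u l = (case md of
      BO \<Rightarrow> {z \<in> Mprev. u z \<ge> Max (l ` Mprev)}
    | LSE h \<Rightarrow> {z \<in> Mprev. u z \<ge> h \<and> l z \<le> h})"

definition loop_cond ::
  "('a \<Rightarrow> 'a \<Rightarrow> real) \<Rightarrow> ('a \<Rightarrow> real) \<Rightarrow> real \<Rightarrow> real \<Rightarrow> real \<Rightarrow> 'a set \<Rightarrow> 'a list \<Rightarrow> bool" where
  "loop_cond k s2 \<delta> b e M xs \<longleftrightarrow> (\<forall>z\<in>M. sqrt b * sqrt (post_var k s2 xs z) \<le> (1 + \<delta>) * e)"

text \<open>A run of TruVaR. ep t is the epoch index in effect when x_t is chosen,
  eta i = eta_(i), M t = M_t, y an arbitrary sequence of observed values.\<close>
definition truvar_run ::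
  "'a set \<Rightarrow> ('a \<Rightarrow> 'a \<Rightarrow> real) \<Rightarrow> ('a \<Rightarrow> real) \<Rightarrow> ('a \<Rightarrow> real) \<Rightarrow> real \<Rightarrow> real \<Rightarrow> real
   \<Rightarrow> (nat \<Rightarrow> real) \<Rightarrow> mode \<Rightarrow> (nat \<Rightarrow> 'a) \<Rightarrow> (nat \<Rightarrow> real) \<Rightarrow> (nat \<Rightarrow> nat) \<Rightarrow> (nat \<Rightarrow> real)
   \<Rightarrow> (nat \<Rightarrow> 'a set) \<Rightarrow> bool" where
  "truvar_run D k s2 c \<delta> r \<eta>1 \<beta> md x y ep \<eta> M \<longleftrightarrow>
     \<eta> 1 = \<eta>1 \<and> (\<forall>i\<ge>1. \<eta> (Suc i) = r * \<eta> i) \<and> ep 1 = 1 \<and> M 0 = D \<and>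
     (\<forall>t\<ge>1.
        x t \<in> D \<and>
        (\<forall>z\<in>D. tru_score k s2 c (\<beta> (ep t)) (\<eta> (ep t)) (M (t - 1)) (pts x (t - 1)) z
               \<le> tru_score k s2 c (\<beta> (ep t)) (\<eta> (ep t)) (M (t - 1)) (pts x (t - 1)) (x t)) \<and>
        M t = update_M md (M (t - 1))
                (ucb k s2 (\<beta> (ep t)) (pts x t) (pts y t))
                (lcb k s2 (\<beta> (ep t)) (pts x t) (pts y t)) \<and>
        ep t \<le> ep (Suc t) \<and>
        (\<forall>j. ep t \<le> j \<and> j < ep (Suc t) \<longrightarrow> loop_cond k s2 \<delta> (\<beta> j) (\<eta> j) (M t) (pts x t)) \<and>
        \<not> loop_cond k s2 \<delta> (\<beta> (ep (Suc t))) (\<eta> (ep (Suc t))) (M t) (pts x t))"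

text \<open>g_s(S) and g_{s,max}, with M = M_{s-1}, xs = x_1..x_{s-1}, th = eta_(i)^2/beta_(i).\<close>
definition g_fun :: "('a \<Rightarrow> 'a \<Rightarrow> real) \<Rightarrow> ('a \<Rightarrow> real) \<Rightarrow> 'a set \<Rightarrow> 'a list \<Rightarrow> real \<Rightarrow> 'a multiset \<Rightarrow> real" where
  "g_fun k s2 M xs th S = (\<Sum>xb\<in>M. max (post_var k s2 xs xb) th) - (\<Sum>xb\<in>M. max (post_var_ms k s2 xs S xb) th)"

definition g_max :: "('a \<Rightarrow> 'a \<Rightarrow> real) \<Rightarrow> ('a \<Rightarrow> real) \<Rightarrow> 'a set \<Rightarrow> 'a list \<Rightarrow> real \<Rightarrow> real" where
  "g_max k s2 M xs th = (\<Sum>xb\<in>M. max 0 (post_var k s2 xs xb - th))"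

end

theory Submission
  imports Defs "Jordan_Normal_Form.Determinant"
begin

lemma quad_form:
  assumes w: "w \<in> carrier_vec (length ys)"
  shows "w \<bullet> (gram_noise k s2 ys *\<^sub>v w) =
    (\<Sum>i<length ys. \<Sum>j<length ys. w$i * w$j * k (ys!i) (ys!j)) + (\<Sum>i<length ys. (w$i)^2 * s2 (ys!i))"
proof -
  let ?n = "length ys"
  have "w \<bullet> (gram_noise k s2 ys *\<^sub>v w) = (\<Sum>i<?n. w$i * (\<Sum>j<?n. (k (ys!i) (ys!j) + (if i = j then s2 (ys!i) else 0)) * w$j))"
    using w unfolding scalar_prod_def mult_mat_vec_def gram_noise_def
    by (auto simp: row_def lessThan_atLeast0 intro!: sum.cong)
  also have "\<dots> = (\<Sum>i<?n. \<Sum>j<?n. w$i * w$j * k (ys!i) (ys!j)) + (\<Sum>i<?n. \<Sum>j<?n. w$i * w$j * (if i = j then s2 (ys!i) else 0))"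
    by (simp add: sum_distrib_left algebra_simps sum.distrib)
  also have "(\<Sum>i<?n. \<Sum>j<?n. w$i * w$j * (if i = j then s2 (ys!i) else 0)) = (\<Sum>i<?n. (w$i)^2 * s2 (ys!i))"
    by (auto simp: power2_eq_square if_distrib cong: if_cong intro!: sum.cong)
  finally show ?thesis .
qed

lemma quad_nonneg:
  assumes kern: "psd_kernel_on D k" and noise: "\<forall>z\<in>D. s2 z > 0" and ys: "set ys \<subseteq> D"
    and w: "w \<in> carrier_vec (length ys)"
  shows "(\<Sum>i<length ys. (w$i)^2 * s2 (ys!i)) \<le> w \<bullet> (gram_noise k s2 ys *\<^sub>v w)"
proof -
  have "0 \<le> (\<Sum>i<length ys. \<Sum>j<length ys. (\<lambda>i. w$i) i * (\<lambda>i. w$i) j * k (ys!i) (ys!j))"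
    using kern ys unfolding psd_kernel_on_def by blast
  then show ?thesis using quad_form[OF w] by simp
qed

lemma gram_inv:
  assumes kern: "psd_kernel_on D k" and noise: "\<forall>z\<in>D. s2 z > 0" and ys: "set ys \<subseteq> D"
  shows "\<exists>B. gram_noise k s2 ys * B = 1\<^sub>m (length ys) \<and> B \<in> carrier_mat (length ys) (length ys)
     \<and> mat_inverse (gram_noise k s2 ys) = Some B"
proof -
  let ?n = "length ys" let ?A = "gram_noise k s2 ys"
  have A: "?A \<in> carrier_mat ?n ?n" unfolding gram_noise_def by simp
  have "det ?A \<noteq> 0"
  proof
    assume "det ?A = 0"
    then obtain v where v: "v \<in> carrier_vec ?n" "v \<noteq> 0\<^sub>v ?n" "?A *\<^sub>v v = 0\<^sub>v ?n"
      using det_0_iff_vec_prod_zero[OF A] by blast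
    have "(\<Sum>i<?n. (v$i)^2 * s2 (ys!i)) \<le> 0"
      using quad_nonneg[OF kern noise ys v(1)] v by simp
    moreover have nn: "\<forall>i\<in>{..<?n}. 0 \<le> (v$i)^2 * s2 (ys!i)"
      proof
      fix i assume "i \<in> {..<?n}"
      hence "ys!i \<in> D" using ys by auto
      thus "0 \<le> (v$i)^2 * s2 (ys!i)" using noise by (simp add: less_imp_le)
    qed
    ultimately have "(\<Sum>i<?n. (v$i)^2 * s2 (ys!i)) = 0"
      by (meson order_antisym sum_nonneg)
    hence "\<forall>i\<in>{..<?n}. (v$i)^2 * s2 (ys!i) = 0" using sum_nonneg_eq_0_iff[of "{..<?n}" "\<lambda>i. (v$i)^2 * s2 (ys!i)"] nn by simp
    hence "\<forall>i<?n. v$i = 0" proof (intro allI impI)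
      fix i assume i: "i < ?n"
      hence "ys!i \<in> D" using ys by auto
      hence "s2 (ys!i) > 0" using noise by auto
      thus "v$i = 0" using \<open>\<forall>i\<in>{..<?n}. (v$i)^2 * s2 (ys!i) = 0\<close> i by force
    qed
    hence "v = 0\<^sub>v ?n" using v(1) by (intro eq_vecI) auto
    with v(2) show False by simp
  qed
  hence U: "?A \<in> Units (ring_mat TYPE(real) ?n undefined)" by (rule det_non_zero_imp_unit[OF A])
  then obtain B where "mat_inverse ?A = Some B"
    using mat_inverse(1)[OF A, of undefined] by (cases "mat_inverse ?A") auto
  thus ?thesis using mat_inverse(2)[OF A] by blast
qed

lemma post_var_le:
  assumes kern: "psd_kernel_on D k" and noise: "\<forall>z\<in>D. s2 z > 0" and ys: "set ys \<subseteq> D"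
  shows "post_var k s2 ys z \<le> k z z"
proof -
  let ?n = "length ys" let ?A = "gram_noise k s2 ys"
  obtain B where B: "?A * B = 1\<^sub>m ?n" "B \<in> carrier_mat ?n ?n" "mat_inverse ?A = Some B"
    using gram_inv[OF kern noise ys] by blast
  have A: "?A \<in> carrier_mat ?n ?n" unfolding gram_noise_def by simp
  let ?kv = "kvec k ys z"
  have kv: "?kv \<in> carrier_vec ?n" unfolding kvec_def by simp
  define w where "w = B *\<^sub>v ?kv"
  have w: "w \<in> carrier_vec ?n" using B(2) kv unfolding w_def by simp
  have Aw: "?A *\<^sub>v w = ?kv" unfolding w_def
    using assoc_mult_mat_vec[OF A B(2) kv, symmetric] B(1) kv by simp
  have "?kv \<bullet> w = w \<bullet> (?A *\<^sub>v w)" using Aw comm_scalar_prod[OF w kv] by simp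
  also have "\<dots> \<ge> 0"
    using quad_nonneg[OF kern noise ys w] noise ys
    by (smt (verit, ccfv_SIG) lessThan_iff nth_mem subsetD sum_nonneg zero_le_power2 mult_nonneg_nonneg)
  finally show ?thesis unfolding post_var_def B(3) w_def by simp
qed

lemma some_mset: "mset (SOME ys. mset ys = S) = S"
  by (rule someI_ex) (use ex_mset in auto)

lemma some_mset_empty: "(SOME ys. mset ys = {#}) = []"
  using some_mset[of "{#}"] by simp

lemma some_mset_single: "(SOME ys. mset ys = {#a#}) = [a]"
proof -
  let ?ys = "SOME ys. mset ys = {#a#}"
  have "mset ?ys = {#a#}" by (rule some_mset)
  thus ?thesis by (cases ?ys) auto
qed

lemma submod_subadd:
  assumes sm: "submodular_ms D F" and F0: "F {#} = 0" and S: "set_mset S \<subseteq> D"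
  shows "F S \<le> sum_mset (image_mset (\<lambda>z. F {#z#}) S)"
  using S
proof (induction S)
  case empty then show ?case using F0 by simp
next
  case (add e S)
  have "F (add_mset e S) - F S \<le> F (add_mset e {#}) - F {#}"
    using sm add.prems unfolding submodular_ms_def by auto
  then show ?case using add F0 by simp
qed

lemma submod_rep:
  assumes sm: "submodular_ms D F" and F0: "F {#} = 0" and e: "e \<in> D"
  shows "F (replicate_mset n e) \<le> real n * F {#e#}"
proof (induction n)
  case 0 then show ?case using F0 by simp
next
  case (Suc n)
  have "F (add_mset e (replicate_mset n e)) - F (replicate_mset n e) \<le> F (add_mset e {#}) - F {#}"
    using sm e unfolding submodular_ms_def by auto
  then show ?case using Suc F0 by (simp add: algebra_simps)
qed

lemma submod_single_nonneg:
  assumes sm: "submodular_ms D F" and F0: "F {#} = 0" and e: "e \<in> D"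
    and lb: "\<And>n. L \<le> F (replicate_mset n e)"
  shows "0 \<le> F {#e#}"
proof (rule ccontr)
  assume "\<not> 0 \<le> F {#e#}"
  hence a: "0 < - F {#e#}" by simp
  obtain n where n: "- L < real n * (- F {#e#})" using reals_Archimedean3[OF a] by blast
  have "L \<le> real n * F {#e#}" using lb[of n] submod_rep[OF sm F0 e, of n] by linarith
  with n show False by simp
qed

lemma sum_mset_mono':
  assumes "\<forall>z\<in>#S. f z \<le> (g z :: real)"
  shows "sum_mset (image_mset f S) \<le> sum_mset (image_mset g S)"
  using assms by (induction S) (auto intro: add_mono)

definition phi :: "real \<Rightarrow> real \<Rightarrow> real \<Rightarrow> real" where
  "phi s th u = max s th - max (s - u) th"

lemma phi_mono: "u \<le> v \<Longrightarrow> phi s th u \<le> phi s th v"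
  unfolding phi_def by (auto simp: max_def)

lemma phi_subadd: "0 \<le> u \<Longrightarrow> 0 \<le> v \<Longrightarrow> phi s th (u + v) \<le> phi s th u + phi s th v"
  unfolding phi_def by (auto simp: max_def)

lemma phi_nonneg: "0 \<le> u \<Longrightarrow> 0 \<le> phi s th u"
  unfolding phi_def by (auto simp: max_def)

lemma phi_sum:
  assumes "\<forall>z\<in>#S. 0 \<le> f z"
  shows "phi s th (sum_mset (image_mset f S)) \<le> sum_mset (image_mset (\<lambda>z. phi s th (f z)) S)"
  using assms
proof (induction S)
  case empty then show ?case by (simp add: phi_def)
next
  case (add e S)
  have "0 \<le> sum_mset (image_mset f S)" using add.prems sum_mset_mono'[of S "\<lambda>_. 0" f] by simp
  hence "phi s th (f e + sum_mset (image_mset f S)) \<le> phi s th (f e) + phi s th (sum_mset (image_mset f S))"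
    using add.prems by (intro phi_subadd) auto
  then show ?case using add by simp
qed

lemma sum_mset_swap:
  "(\<Sum>a\<in>A. sum_mset (image_mset (f a) S)) = sum_mset (image_mset (\<lambda>z. \<Sum>a\<in>A. f a z) S)"
  by (induction S) (auto simp: sum.distrib)


lemma post_var_ms_le:
  assumes kern: "psd_kernel_on D k" and noise: "\<forall>z\<in>D. s2 z > 0" and kdiag: "\<forall>z\<in>D. k z z = 1"
    and xs: "set xs \<subseteq> D" and S: "set_mset S \<subseteq> D" and xb: "xb \<in> D"
  shows "post_var_ms k s2 xs S xb \<le> 1"
proof -
  have "set (SOME ys. mset ys = S) = set_mset S" by (metis set_mset_mset some_mset)
  hence "set (xs @ (SOME ys. mset ys = S)) \<subseteq> D" using xs S by auto
  from post_var_le[OF kern noise this, of xb] show ?thesis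
    using kdiag xb unfolding post_var_ms_def by simp
qed

lemma term_bound:
  assumes kern: "psd_kernel_on D k" and noise: "\<forall>z\<in>D. s2 z > 0" and kdiag: "\<forall>z\<in>D. k z z = 1"
    and submod: "\<forall>xs. set xs \<subseteq> D \<longrightarrow>
        (\<forall>z\<in>D. submodular_ms D (\<lambda>S'. post_var k s2 xs z - post_var_ms k s2 xs S' z))"
    and xs: "set xs \<subseteq> D" and S: "set_mset S \<subseteq> D" and xb: "xb \<in> D"
  shows "max (post_var k s2 xs xb) th - max (post_var_ms k s2 xs S xb) th
      \<le> sum_mset (image_mset (\<lambda>z. max (post_var k s2 xs xb) th - max (post_var_ms k s2 xs {#z#} xb) th) S)"
    and "\<And>z. z \<in> D \<Longrightarrow> 0 \<le> max (post_var k s2 xs xb) th - max (post_var_ms k s2 xs {#z#} xb) th"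
proof -
  define F where "F S' = post_var k s2 xs xb - post_var_ms k s2 xs S' xb" for S'
  let ?s = "post_var k s2 xs xb"
  have sm: "submodular_ms D F" using submod xs xb unfolding F_def by blast
  have F0: "F {#} = 0" unfolding F_def post_var_ms_def some_mset_empty by simp
  have Fz: "0 \<le> F {#z#}" if z: "z \<in> D" for z
  proof (rule submod_single_nonneg[OF sm F0 z])
    fix n
    have "set_mset (replicate_mset n z) \<subseteq> D" using z by auto
    from post_var_ms_le[OF kern noise kdiag xs this xb]
    show "?s - 1 \<le> F (replicate_mset n z)" unfolding F_def by simp
  qed
  have eq: "max ?s th - max (post_var_ms k s2 xs S' xb) th = phi ?s th (F S')" for S'
    unfolding phi_def F_def by simp
  show "0 \<le> max ?s th - max (post_var_ms k s2 xs {#z#} xb) th" if "z \<in> D" for z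
    unfolding eq using phi_nonneg Fz that by blast
  have "phi ?s th (F S) \<le> phi ?s th (sum_mset (image_mset (\<lambda>z. F {#z#}) S))"
    by (rule phi_mono, rule submod_subadd[OF sm F0 S])
  also have "\<dots> \<le> sum_mset (image_mset (\<lambda>z. phi ?s th (F {#z#})) S)"
    by (rule phi_sum) (use Fz S in auto)
  finally show "max ?s th - max (post_var_ms k s2 xs S xb) th
      \<le> sum_mset (image_mset (\<lambda>z. max ?s th - max (post_var_ms k s2 xs {#z#} xb) th) S)"
    unfolding eq .
qed

lemma update_M_sub: "update_M md A u l \<subseteq> A"
  by (cases md) (auto simp: update_M_def)

lemma run_facts:
  assumes run: "truvar_run D k s2 c \<delta> r \<eta>1 \<beta> md x y ep \<eta> M"
  shows "\<And>t. t \<ge> 1 \<Longrightarrow> ep t \<ge> 1"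
    and "\<And>t. t \<ge> 1 \<Longrightarrow> M t \<subseteq> M (t - 1)"
    and "\<And>t. M t \<subseteq> D"
    and "\<And>t. set (pts x t) \<subseteq> D"
proof -
  show ep: "ep t \<ge> 1" if "t \<ge> 1" for t
    using that
  proof (induction t rule: dec_induct)
    case base then show ?case using run unfolding truvar_run_def by simp
  next
    case (step n)
    then show ?case using run unfolding truvar_run_def by (meson order_trans)
  qed
  show Msub: "M t \<subseteq> M (t - 1)" if "t \<ge> 1" for t
    using run that update_M_sub unfolding truvar_run_def by metis
  show "M t \<subseteq> D" for t
  proof (induction t)
    case 0 then show ?case using run unfolding truvar_run_def by simp
  next
    case (Suc t) then show ?case using Msub[of "Suc t"] by simp
  qed
  show "set (pts x t) \<subseteq> D" for t
    using run unfolding truvar_run_def pts_def by auto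
qed

lemma max_scale: "(b::real) > 0 \<Longrightarrow> max (b * u) (e\<^sup>2) = b * max u (e\<^sup>2 / b)"
  by (simp add: max_def field_simps)

lemma score_eq:
  assumes b: "(b::real) > 0"
  shows "tru_score k s2 c b e M xs z = b / c z * g_fun k s2 M xs (e\<^sup>2 / b) {#z#}"
  unfolding tru_score_def g_fun_def using b
  by (simp add: max_scale sum_distrib_left[symmetric] right_diff_distrib)

theorem mainTheorem5:
  fixes D :: "'a set" and k :: "'a \<Rightarrow> 'a \<Rightarrow> real" and s2 c :: "'a \<Rightarrow> real"
    and \<delta> r \<eta>1 :: real and \<beta> :: "nat \<Rightarrow> real" and md :: mode
    and x :: "nat \<Rightarrow> 'a" and y :: "nat \<Rightarrow> real" and ep :: "nat \<Rightarrow> nat"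
    and \<eta> :: "nat \<Rightarrow> real" and M :: "nat \<Rightarrow> 'a set"
    and t :: nat and S :: "'a multiset"
  assumes finD: "finite D"
    and kern: "psd_kernel_on D k"
    and kdiag: "\<forall>z\<in>D. k z z = 1"
    and noise: "\<forall>z\<in>D. s2 z > 0"
    and cost: "\<forall>z\<in>D. c z > 0"
    and params: "\<delta> > 0" "0 < r" "r < 1" "\<eta>1 > 0" "\<forall>i\<ge>1. \<beta> i > 0"
    and submod: "\<forall>xs. set xs \<subseteq> D \<longrightarrow>
        (\<forall>z\<in>D. submodular_ms D (\<lambda>S'. post_var k s2 xs z - post_var_ms k s2 xs S' z))"
    and run: "truvar_run D k s2 c \<delta> r \<eta>1 \<beta> md x y ep \<eta> M"
    and t1: "t \<ge> 1"
    and same_epoch: "ep (Suc t) = ep t"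
    and gpos: "g_max k s2 (M (t - 1)) (pts x (t - 1)) ((\<eta> (ep t))\<^sup>2 / \<beta> (ep t)) > 0"
    and SD: "set_mset S \<subseteq> D"
    and Sopt: "g_fun k s2 (M (t - 1)) (pts x (t - 1)) ((\<eta> (ep t))\<^sup>2 / \<beta> (ep t)) S
               = g_max k s2 (M (t - 1)) (pts x (t - 1)) ((\<eta> (ep t))\<^sup>2 / \<beta> (ep t))"
    and Smin: "\<forall>S'. set_mset S' \<subseteq> D \<and>
               g_fun k s2 (M (t - 1)) (pts x (t - 1)) ((\<eta> (ep t))\<^sup>2 / \<beta> (ep t)) S'
                 = g_max k s2 (M (t - 1)) (pts x (t - 1)) ((\<eta> (ep t))\<^sup>2 / \<beta> (ep t))
               \<longrightarrow> mcost c S \<le> mcost c S'"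
  shows "g_max k s2 (M t) (pts x t) ((\<eta> (ep t))\<^sup>2 / \<beta> (ep t))
         \<le> (1 - c (x t) / mcost c S) * g_max k s2 (M (t - 1)) (pts x (t - 1)) ((\<eta> (ep t))\<^sup>2 / \<beta> (ep t))"
proof -
  obtain t0 where t0: "t = Suc t0" using t1 by (cases t) auto
  let ?xs = "pts x t0" let ?M = "M t0" let ?b = "\<beta> (ep t)" let ?e = "\<eta> (ep t)"
  let ?th = "?e\<^sup>2 / ?b"
  let ?g = "g_fun k s2 ?M ?xs ?th"
  let ?gmax = "g_max k s2 ?M ?xs ?th"
  let ?g1 = "?g {#x t#}"
  have xsD: "set ?xs \<subseteq> D" using run_facts(4)[OF run] .
  have MD: "?M \<subseteq> D" using run_facts(3)[OF run] .
  have finM: "finite ?M" using finite_subset[OF MD finD] .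
  have Msub: "M t \<subseteq> ?M" using run_facts(2)[OF run t1] t0 by simp
  have b: "?b > 0" using run_facts(1)[OF run t1] params(5) by simp
  have xt: "x t \<in> D" using run t1 unfolding truvar_run_def by blast
  have ct: "c (x t) > 0" using cost xt by blast
  have ptsS: "pts x t = ?xs @ [x t]" unfolding pts_def t0 by simp
  have hopt: "?g {#z#} / c z \<le> ?g1 / c (x t)" if z: "z \<in> D" for z
  proof -
    have "tru_score k s2 c ?b ?e ?M ?xs z \<le> tru_score k s2 c ?b ?e ?M ?xs (x t)"
    proof -
      have "\<forall>z\<in>D. tru_score k s2 c ?b ?e (M (t - 1)) (pts x (t - 1)) z
               \<le> tru_score k s2 c ?b ?e (M (t - 1)) (pts x (t - 1)) (x t)"
        using run t1 unfolding truvar_run_def by blast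
      thus ?thesis using z t0 by simp
    qed
    hence "?b * (?g {#z#} / c z) \<le> ?b * (?g1 / c (x t))"
      unfolding score_eq[OF b] by (simp add: algebra_simps)
    thus ?thesis using b by (meson mult_le_cancel_left_pos)
  qed
  define T where "T xb S' = max (post_var k s2 ?xs xb) ?th - max (post_var_ms k s2 ?xs S' xb) ?th" for xb S'
  have gT: "?g S' = (\<Sum>xb\<in>?M. T xb S')" for S'
    unfolding g_fun_def T_def by (simp add: sum_subtractf)
  have g1nn: "0 \<le> ?g1"
    unfolding gT using term_bound(2)[OF kern noise kdiag submod xsD _ _ xt] MD SD
    by (auto intro!: sum_nonneg simp: T_def)
  have "?g S \<le> (\<Sum>xb\<in>?M. sum_mset (image_mset (\<lambda>z. T xb {#z#}) S))"
    unfolding gT using term_bound(1)[OF kern noise kdiag submod xsD SD] MD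
    by (auto intro!: sum_mono simp: T_def)
  also have "\<dots> = sum_mset (image_mset (\<lambda>z. ?g {#z#}) S)"
    unfolding sum_mset_swap gT ..
  also have "\<dots> \<le> sum_mset (image_mset (\<lambda>z. c z * (?g1 / c (x t))) S)"
  proof (rule sum_mset_mono)
    fix z assume "z \<in># S"
    hence z: "z \<in> D" using SD by auto
    hence cz: "c z > 0" using cost by auto
    have "?g {#z#} = c z * (?g {#z#} / c z)" using cz by simp
    also have "\<dots> \<le> c z * (?g1 / c (x t))" using hopt[OF z] cz by (intro mult_left_mono) auto
    finally show "?g {#z#} \<le> c z * (?g1 / c (x t))" .
  qed
  also have "\<dots> = mcost c S * (?g1 / c (x t))"
    unfolding mcost_def sum_mset_distrib_right by (rule refl)
  finally have main: "?gmax \<le> mcost c S * (?g1 / c (x t))" using Sopt t0 by simp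
  have gpos': "?gmax > 0" using gpos t0 by simp
  have mc: "mcost c S > 0"
  proof (rule ccontr)
    assume "\<not> mcost c S > 0"
    moreover have "0 \<le> ?g1 / c (x t)" using g1nn ct by simp
    ultimately have "mcost c S * (?g1 / c (x t)) \<le> 0"
      by (meson mult_nonpos_nonneg not_less)
    with main gpos' show False by simp
  qed
  have key: "c (x t) / mcost c S * ?gmax \<le> ?g1"
  proof -
    have "c (x t) * ?gmax \<le> mcost c S * ?g1" using main ct
      by (simp add: field_simps)
    thus ?thesis using mc by (simp add: field_simps)
  qed
  have next1: "g_max k s2 (M t) (pts x t) ?th \<le> (\<Sum>xb\<in>?M. max 0 (post_var k s2 (pts x t) xb - ?th))"
    unfolding g_max_def by (rule sum_mono2[OF finM Msub]) auto
  have pv1: "post_var k s2 (pts x t) xb = post_var_ms k s2 ?xs {#x t#} xb" for xb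
    unfolding post_var_ms_def some_mset_single ptsS ..
  have "(\<Sum>xb\<in>?M. max 0 (post_var k s2 (pts x t) xb - ?th)) = ?gmax - ?g1"
    unfolding g_max_def g_fun_def pv1 sum_subtractf[symmetric]
    by (rule sum.cong) (auto simp: max_def)
  with next1 have "g_max k s2 (M t) (pts x t) ?th \<le> ?gmax - ?g1" by simp
  also have "\<dots> \<le> (1 - c (x t) / mcost c S) * ?gmax" using key by (simp add: algebra_simps)
  finally show ?thesis using t0 by simp
qed

end
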